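(* Let $k\ge2$, $n>2^k$, $c=2^k-2$, and assume $d=\gcd(c,n-1)>1$; let $w=(n-1)/d$ and let $y_v=0$ if $v$ is a multiple of $d$ and $y_v=\frac{1}{w(d-1)}$ otherwise, for $v\in V=\{0,\dots,n-1\}$. Then for every $v\in V$ and every integer $1\le\ell\le n-1$, $$y([v\oplus\ell]_{n-1})=\frac{\ell-\lfloor\ell/d\rfloor}{w(d-1)}\quad\text{or}\quad y([v\oplus\ell]_{n-1})=\frac{\ell-\lceil\ell/d\rceil}{w(d-1)}.$$
   Context: For integers $u,\ell$ and $r\ge1$, $[u\oplus\ell]_r=\{w\bmod r: u\le w\le u+\ell-1\}$ (empty if $\ell\le0$). For $S\subseteq V$, $y(S)=\sum_{v\in S}y_v$. *)

theory Defs
  imports Main "HOL.Real"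
begin

definition cyc_interval :: "int \<Rightarrow> int \<Rightarrow> int \<Rightarrow> int set" where
  "cyc_interval u l r = {x mod r | x. u \<le> x \<and> x \<le> u + l - 1}"

end

theory Submission imports Defs begin
lemma mults: fixes a b d j :: int assumes "d > 0"
  shows "(a < d*j \<and> d*j \<le> b) \<longleftrightarrow> (a div d < j \<and> j \<le> b div d)"
  by (smt (verit) assms div_mod_decomp_int mod_int_pos_iff mult.commute
    nonzero_mult_div_cancel_left zdiv_mono1)
lemma injm: fixes x x' r :: int assumes "x mod r = x' mod r" "\<bar>x - x'\<bar> < r" shows "x = x'"
  by (smt (verit, best) assms(1,2) mod_diff_cong mod_pos_pos_trivial)

lemma card_mults: fixes a l d :: int assumes "d > 0" "l \<ge> 0"
  shows "card {x\<in>{a+1..a+l}. d dvd x} = nat ((a+l) div d - a div d)"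
proof -
  have "{x\<in>{a+1..a+l}. d dvd x} = (\<lambda>j. d*j) ` {a div d<..(a+l) div d}"
  proof (intro set_eqI iffI)
    fix x assume "x \<in> {x\<in>{a+1..a+l}. d dvd x}"
    then obtain j where "x = d*j" "a < d*j" "d*j \<le> a+l" by auto
    then show "x \<in> (\<lambda>j. d*j) ` {a div d<..(a+l) div d}" using mults[OF assms(1), of a j "a+l"] by auto
  next
    fix x assume "x \<in> (\<lambda>j. d*j) ` {a div d<..(a+l) div d}"
    then obtain j where "x = d*j" "a div d < j" "j \<le> (a+l) div d" by (elim imageE) auto
    then show "x \<in> {x\<in>{a+1..a+l}. d dvd x}" using mults[OF assms(1), of a j "a+l"] by auto
  qed
  moreover have "inj_on (\<lambda>j. d*j) X" for X using assms(1) by (auto simp: inj_on_def)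
  ultimately show ?thesis by (simp add: card_image)
qed

lemma floor_or_ceil: fixes A B a :: int and l d :: nat assumes "d > 0"
  and "d*A \<le> a" "a < d*A + d" "d*B \<le> a + l" "a + l < d*B + d"
  shows "B - A = \<lfloor>real l / real d\<rfloor> \<or> B - A = \<lceil>real l / real d\<rceil>"
proof (cases "d*(B-A) \<le> l")
  case True
  have "B - A = \<lfloor>real l / real d\<rfloor>"
  proof (rule floor_unique[symmetric])
    have "real_of_int (d*(B-A)) \<le> real l" using True by linarith
    then show "real_of_int (B-A) \<le> real l / real d" using assms(1) by (simp add: field_simps)
    have "l < d*(B-A) + d" using assms by (simp add: algebra_simps)
    then have "real l < real_of_int (d*(B-A) + d)" by linarith
    then show "real l / real d < real_of_int (B-A) + 1" using assms(1) by (simp add: field_simps)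
  qed
  then show ?thesis ..
next
  case False
  have "B - A = \<lceil>real l / real d\<rceil>"
  proof (rule ceiling_unique[symmetric])
    have "d*(B-A) < l + d" using assms by (simp add: algebra_simps)
    then have "real_of_int (int d * (B - A)) < real_of_int (int (l+d))" by (simp only: of_int_less_iff)
    then have "real_of_int (B-A) * real d < real l + real d" by (simp add: algebra_simps)
    then have "(real_of_int (B-A) - 1) * real d < real l" by (simp add: algebra_simps)
    then have "real_of_int (B-A) - 1 < real l / real d"
      using assms(1) pos_less_divide_eq[of "real d"] by simp
    then show "real_of_int (B-A) - 1 < real l / real d" .
    have "d*(B-A) < l + d" using assms by (simp add: algebra_simps)
    have "int l < int d * (B - A)" using False by linarith
    then have "real_of_int (int l) < real_of_int (int d * (B - A))" by (simp only: of_int_less_iff)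
    then have "real l \<le> real_of_int (B-A) * real d" by (simp add: algebra_simps)
    then show "real l / real d \<le> real_of_int (B-A)" using assms(1) by (simp add: pos_divide_le_eq)
  qed
  then show ?thesis ..
qed
theorem lemma3p2:
  fixes k n c d w :: nat and y :: "int \<Rightarrow> real"
  assumes "k \<ge> 2" and "n > 2 ^ k" and "c = 2 ^ k - 2"
    and "d = gcd c (n - 1)" and "d > 1" and "w = (n - 1) div d"
    and "\<And>v. y v = (if int d dvd v then 0 else 1 / (real w * (real d - 1)))"
  shows "\<forall>v \<in> {0..<n}. \<forall>l::nat. 1 \<le> l \<and> l \<le> n - 1 \<longrightarrow>
      (sum y (cyc_interval (int v) (int l) (int (n - 1)))
         = (real l - of_int \<lfloor>real l / real d\<rfloor>) / (real w * (real d - 1))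
       \<or> sum y (cyc_interval (int v) (int l) (int (n - 1)))
         = (real l - of_int \<lceil>real l / real d\<rceil>) / (real w * (real d - 1)))"
proof (intro ballI allI impI)
  fix v l assume v: "v \<in> {0..<n}" and l: "1 \<le> l \<and> l \<le> n - 1"
  define m where "m = int (n - 1)"
  define a where "a = 1 / (real w * (real d - 1))"
  define S where "S = {int v .. int v + int l - 1}"
  define P where "P = (\<lambda>x::int. int d dvd x)"
  have "(2::nat) ^ k \<ge> 2 ^ 2" using assms(1) by (rule power_increasing) auto
  then have m0: "m > 0" using assms(2) unfolding m_def by auto
  have dm: "int d dvd m" unfolding m_def assms(4) by (metis gcd_dvd2 int_dvd_int_iff)
  have lm: "int l \<le> m" using l unfolding m_def by auto
  have cyc: "cyc_interval (int v) (int l) m = (\<lambda>x. x mod m) ` S"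
    unfolding cyc_interval_def S_def by auto
  have inj: "inj_on (\<lambda>x. x mod m) S"
  proof (rule inj_onI)
    fix x x' assume "x \<in> S" "x' \<in> S" "x mod m = x' mod m"
    then show "x = x'" using injm[of x m x'] lm unfolding S_def by auto
  qed
  have "sum y (cyc_interval (int v) (int l) m) = sum (\<lambda>x. y (x mod m)) S"
    unfolding cyc using sum.reindex[OF inj, of y] by (simp add: o_def)
  also have "\<dots> = sum (\<lambda>x. if \<not> P x then a else 0) S"
    by (rule sum.cong) (auto simp: assms(7) a_def P_def dvd_mod_iff[OF dm])
  also have "\<dots> = sum (\<lambda>x. a) {x\<in>S. \<not> P x}"
    by (rule sum.inter_filter[symmetric]) (simp add: S_def)
  also have "\<dots> = real (card {x\<in>S. \<not> P x}) * a" by simp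
  finally have sumeq: "sum y (cyc_interval (int v) (int l) m) = real (card {x\<in>S. \<not> P x}) * a" .
  have cS: "card S = l" unfolding S_def by simp
  have fS: "finite S" unfolding S_def by simp
  have "{x\<in>S. \<not> P x} = S - {x\<in>S. P x}" by auto
  then have c1: "card {x\<in>S. \<not> P x} = l - card {x\<in>S. P x}"
    using card_Diff_subset[of "{x\<in>S. P x}" S] fS cS by (simp add: finite_subset)
  have c2: "card {x\<in>S. P x} \<le> l" using cS fS by (metis (no_types, lifting) card_mono mem_Collect_eq subsetI)
  define A where "A = (int v - 1) div int d"
  define B where "B = (int v - 1 + int l) div int d"
  have "{x\<in>S. P x} = {x\<in>{(int v - 1)+1..(int v - 1)+int l}. int d dvd x}"
    unfolding S_def P_def by auto
  then have cP: "card {x\<in>S. P x} = nat (B - A)"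
    using card_mults[of "int d" "int l" "int v - 1"] assms(5) unfolding S_def P_def A_def B_def
    by simp
  have dv: "int d * (x div int d) \<le> x \<and> x < int d * (x div int d) + int d" for x
  proof -
    have "x = int d * (x div int d) + x mod int d" by simp
    moreover have "0 \<le> x mod int d" "x mod int d < int d" using assms(5) by simp_all
    ultimately show ?thesis by linarith
  qed
  have fc: "B - A = \<lfloor>real l / real d\<rfloor> \<or> B - A = \<lceil>real l / real d\<rceil>"
    apply (rule floor_or_ceil[where a="int v - 1"])
    using assms(5) dv[of "int v - 1"] dv[of "int v - 1 + int l"] unfolding A_def B_def
    by auto
  show "sum y (cyc_interval (int v) (int l) (int (n - 1)))
         = (real l - of_int \<lfloor>real l / real d\<rfloor>) / (real w * (real d - 1))
       \<or> sum y (cyc_interval (int v) (int l) (int (n - 1)))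
         = (real l - of_int \<lceil>real l / real d\<rceil>) / (real w * (real d - 1))"
  proof -
    have BA: "A \<le> B" unfolding A_def B_def using assms(5) by (intro zdiv_mono1) auto
    have le: "nat (B - A) \<le> l" using c2 cP by simp
    have "sum y (cyc_interval (int v) (int l) (int (n - 1))) = (real l - of_int (B - A)) * a"
      using sumeq c1 cP le BA unfolding m_def by (simp add: of_nat_diff)
    then show ?thesis using fc unfolding a_def by auto
  qed
qed
end
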